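(* Let $F$ be a field of characteristic $0$, $n\ge 1$, $i=\lfloor n/2\rfloor$, $j=\lfloor (n-1)/2\rfloor$. Let $f=p_{2a_1+1}\cdots p_{2a_{i+1}+1}$ be a long product, i.e. $a_1,\dots,a_{i+1}>j$. Suppose $f=\alpha_1g_1+\dots+\alpha_mg_m$ with $\alpha_\ell\in F$ and $g_1,\dots,g_m$ pairwise distinct proper products. Then every $g_\ell=p_1^{c_1}p_3^{c_3}\cdots p_{2j+1}^{c_{2j+1}}p_{2b_1+1}\cdots p_{2b_{i'}+1}$ with $\alpha_\ell\neq 0$ has at least one of $c_1,c_3,\dots,c_{2j+1}$ positive.
   Context: $p_k=x_1^k+\dots+x_n^k$. A proper product is a polynomial $p_1^{c_1}p_3^{c_3}\cdots p_{2j+1}^{c_{2j+1}}p_{2b_1+1}\cdots p_{2b_{i'}+1}$ with integers $c_1,\dots,c_{2j+1}\ge 0$, $0\le i'\le i$, and integers $b_k>j$ (a multiset); distinct means distinct exponent data. *)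

theory Defs
  imports "HOL-Library.Poly_Mapping" "HOL-Library.Multiset"
begin

(* Multivariate polynomials over 'a in variables x_0, x_1, ... are represented as
  finitely supported maps from monomials (exponent vectors nat =>0 nat) to coefficients,
  with the convolution product of HOL-Library.Poly_Mapping.*)

type_synonym 'a mpoly = "(nat \<Rightarrow>\<^sub>0 nat) \<Rightarrow>\<^sub>0 'a"

definition var_pow :: "nat \<Rightarrow> nat \<Rightarrow> 'a::comm_ring_1 mpoly" where
  "var_pow v k = Poly_Mapping.single (Poly_Mapping.single v k) 1"

definition power_sum :: "nat \<Rightarrow> nat \<Rightarrow> 'a::comm_ring_1 mpoly" where
  "power_sum n k = (\<Sum>v<n. var_pow v k)"

(* Exponent data of a proper product for parameters i, j:
  a list cs = [c_1, c_3, ..., c_{2j+1}] of length j+1 and a multiset B of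
  integers b > j with at most i elements.*)
definition proper_data :: "nat \<Rightarrow> nat \<Rightarrow> nat list \<times> nat multiset \<Rightarrow> bool" where
  "proper_data i j d \<longleftrightarrow> length (fst d) = Suc j \<and> (\<forall>b\<in>#snd d. j < b) \<and> size (snd d) \<le> i"

definition proper_prod :: "nat \<Rightarrow> nat list \<times> nat multiset \<Rightarrow> 'a::comm_ring_1 mpoly" where
  "proper_prod n d =
     (\<Prod>t<length (fst d). power_sum n (2*t+1) ^ (fst d ! t)) *
     (\<Prod>b\<in>#snd d. power_sum n (2*b+1))"

end

theory Submission
  imports Defs "HOL-Computational_Algebra.Polynomial" "HOL-Library.FuncSet"
begin


definition mnm :: "(nat \<Rightarrow> 'b::comm_ring_1) \<Rightarrow> (nat \<Rightarrow>\<^sub>0 nat) \<Rightarrow> 'b" where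
  "mnm \<sigma> \<mu> = (\<Prod>v\<in>Poly_Mapping.keys \<mu>. \<sigma> v ^ Poly_Mapping.lookup \<mu> v)"

definition ev :: "(nat \<Rightarrow> 'a::comm_ring_1 mpoly poly) \<Rightarrow> 'a mpoly \<Rightarrow> 'a mpoly poly" where
  "ev \<sigma> h = (\<Sum>\<mu>\<in>Poly_Mapping.keys h. [:Poly_Mapping.single 0 (Poly_Mapping.lookup h \<mu>):] * mnm \<sigma> \<mu>)"

lemma mnm_superset:
  assumes "finite A" "Poly_Mapping.keys \<mu> \<subseteq> A"
  shows "mnm \<sigma> \<mu> = (\<Prod>v\<in>A. \<sigma> v ^ Poly_Mapping.lookup \<mu> v)"
  unfolding mnm_def
  by (rule prod.mono_neutral_left) (use assms in \<open>auto simp: in_keys_iff\<close>)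

lemma mnm_add: "mnm \<sigma> (\<mu> + \<nu>) = mnm \<sigma> \<mu> * mnm \<sigma> \<nu>"
proof -
  let ?A = "Poly_Mapping.keys \<mu> \<union> Poly_Mapping.keys \<nu>"
  have "mnm \<sigma> (\<mu> + \<nu>) = (\<Prod>v\<in>?A. \<sigma> v ^ Poly_Mapping.lookup (\<mu>+\<nu>) v)"
    by (rule mnm_superset) (auto simp: keys_add)
  also have "\<dots> = (\<Prod>v\<in>?A. \<sigma> v ^ Poly_Mapping.lookup \<mu> v) * (\<Prod>v\<in>?A. \<sigma> v ^ Poly_Mapping.lookup \<nu> v)"
    by (simp add: lookup_add power_add prod.distrib)
  also have "\<dots> = mnm \<sigma> \<mu> * mnm \<sigma> \<nu>"
    by (subst (1 2) mnm_superset[of ?A]) auto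
  finally show ?thesis .
qed

lemma mnm_zero [simp]: "mnm \<sigma> 0 = 1"
  by (simp add: mnm_def)

lemma mnm_single [simp]: "mnm \<sigma> (Poly_Mapping.single v k) = \<sigma> v ^ k"
  by (simp add: mnm_def)

lemma ev_superset:
  assumes "finite A" "Poly_Mapping.keys h \<subseteq> A"
  shows "ev \<sigma> h = (\<Sum>\<mu>\<in>A. [:Poly_Mapping.single 0 (Poly_Mapping.lookup h \<mu>):] * mnm \<sigma> \<mu>)"
  unfolding ev_def
  by (rule sum.mono_neutral_left) (use assms in \<open>auto simp: in_keys_iff\<close>)

lemma ev_add: "ev \<sigma> (h + g) = ev \<sigma> h + ev \<sigma> g"
proof -
  let ?A = "Poly_Mapping.keys h \<union> Poly_Mapping.keys g"
  have "ev \<sigma> (h + g) = (\<Sum>\<mu>\<in>?A. [:Poly_Mapping.single 0 (Poly_Mapping.lookup (h+g) \<mu>):] * mnm \<sigma> \<mu>)"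
    by (rule ev_superset) (auto simp: keys_add)
  also have "\<dots> = (\<Sum>\<mu>\<in>?A. [:Poly_Mapping.single 0 (Poly_Mapping.lookup h \<mu>):] * mnm \<sigma> \<mu>)
      + (\<Sum>\<mu>\<in>?A. [:Poly_Mapping.single 0 (Poly_Mapping.lookup g \<mu>):] * mnm \<sigma> \<mu>)"
    by (simp add: lookup_add single_add distrib_right sum.distrib smult_add_left)
  also have "\<dots> = ev \<sigma> h + ev \<sigma> g"
    by (subst (1 2) ev_superset[of ?A]) auto
  finally show ?thesis .
qed

lemma ev_zero [simp]: "ev \<sigma> 0 = 0"
  by (simp add: ev_def)

lemma ev_sum: "ev \<sigma> (\<Sum>x\<in>A. f x) = (\<Sum>x\<in>A. ev \<sigma> (f x))"
  by (induction A rule: infinite_finite_induct) (auto simp: ev_add)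

lemma ev_single: "ev \<sigma> (Poly_Mapping.single \<mu> a) = [:Poly_Mapping.single 0 a:] * mnm \<sigma> \<mu>"
  by (cases "a = 0") (auto simp: ev_def)

lemma pm_expand: "h = (\<Sum>\<mu>\<in>Poly_Mapping.keys h. Poly_Mapping.single \<mu> (Poly_Mapping.lookup h \<mu>))"
  by (rule poly_mapping_eqI)
     (auto simp: lookup_sum lookup_single when_def in_keys_iff sum.delta' split: if_splits)

lemma const_mult: "[:Poly_Mapping.single 0 (a * b):] = [:Poly_Mapping.single 0 a:] * [:Poly_Mapping.single 0 (b::'a::comm_ring_1):]"
  by (simp add: mult_single mult.commute)

lemma ev_mult: "ev \<sigma> (h * g) = ev \<sigma> h * ev \<sigma> (g::'a::comm_ring_1 mpoly)"
proof -
  have "h * g = (\<Sum>\<mu>\<in>Poly_Mapping.keys h. \<Sum>\<nu>\<in>Poly_Mapping.keys g.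
      Poly_Mapping.single (\<mu>+\<nu>) (Poly_Mapping.lookup h \<mu> * Poly_Mapping.lookup g \<nu>))"
    by (subst (1 2) pm_expand) (simp add: sum_product mult_single)
  then have "ev \<sigma> (h * g) = (\<Sum>\<mu>\<in>Poly_Mapping.keys h. \<Sum>\<nu>\<in>Poly_Mapping.keys g.
      ([:Poly_Mapping.single 0 (Poly_Mapping.lookup h \<mu>):] * mnm \<sigma> \<mu>) * ([:Poly_Mapping.single 0 (Poly_Mapping.lookup g \<nu>):] * mnm \<sigma> \<nu>))"
    by (simp add: ev_sum ev_single const_mult mnm_add mult_ac)
  also have "\<dots> = ev \<sigma> h * ev \<sigma> g"
    by (simp add: ev_def sum_product)
  finally show ?thesis .
qed

lemma ev_one [simp]: "ev \<sigma> 1 = 1"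
proof -
  have "(1::'a::comm_ring_1 mpoly) = Poly_Mapping.single 0 1" by simp
  then show ?thesis by (metis ev_single mnm_zero mult.right_neutral one_pCons single_one)
qed

lemma ev_power: "ev \<sigma> (h ^ k) = ev \<sigma> h ^ k"
  by (induction k) (auto simp: ev_mult)

lemma ev_prod_list: "ev \<sigma> (prod_list xs) = prod_list (map (ev \<sigma>) xs)"
  by (induction xs) (auto simp: ev_mult)

lemma ev_prod_mset: "ev \<sigma> (prod_mset M) = prod_mset (image_mset (ev \<sigma>) M)"
  by (induction M) (auto simp: ev_mult)

lemma ev_prod: "ev \<sigma> (\<Prod>x\<in>A. f x) = (\<Prod>x\<in>A. ev \<sigma> (f x))"
  by (induction A rule: infinite_finite_induct) (auto simp: ev_mult)




definition T :: "nat \<Rightarrow> 'a::comm_ring_1 mpoly" where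
  "T l = Poly_Mapping.single (Poly_Mapping.single (2*l) 1) 1"
definition E :: "nat \<Rightarrow> 'a::comm_ring_1 mpoly" where
  "E l = Poly_Mapping.single (Poly_Mapping.single (2*l+1) 1) 1"
definition sig :: "nat \<Rightarrow> nat \<Rightarrow> 'a::comm_ring_1 mpoly poly" where
  "sig i v = (if v < 2*i then (if even v then [:T (v div 2), E (v div 2):] else [:- T (v div 2):]) else 0)"
definition mo :: "nat \<Rightarrow> nat \<Rightarrow> (nat \<Rightarrow>\<^sub>0 nat)" where
  "mo l m = Poly_Mapping.single (2*l) (m-1) + Poly_Mapping.single (2*l+1) 1"
definition lin :: "nat \<Rightarrow> nat \<Rightarrow> 'a::comm_ring_1 mpoly" where
  "lin i m = (\<Sum>l<i. Poly_Mapping.single (mo l m) (of_nat m))"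

lemma coeff_power_1: "coeff (p ^ m) 1 = of_nat m * coeff p 0 ^ (m-1) * coeff (p::'b::comm_ring_1 poly) 1"
proof (induction m)
  case 0 then show ?case by simp
next
  case (Suc m)
  have "coeff (p ^ Suc m) 1 = coeff p 0 * coeff (p^m) 1 + coeff p 1 * coeff (p^m) 0"
    by (simp add: coeff_mult numeral_2_eq_2 atMost_Suc)
  also have "\<dots> = of_nat (Suc m) * coeff p 0 ^ m * coeff p 1"
    using Suc by (cases m) (auto simp: coeff_0_power coeff_mult_0 algebra_simps)
  finally show ?case by simp
qed

lemma single_var_pow: "(Poly_Mapping.single (Poly_Mapping.single v (1::nat)) (1::'a::comm_ring_1)) ^ k
   = Poly_Mapping.single (Poly_Mapping.single v k) 1"
  by (induction k) (simp_all add: mult_single single_add[symmetric])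

lemma ev_var_pow: "ev \<sigma> (var_pow v k) = \<sigma> v ^ k"
  by (simp add: var_pow_def ev_single)

lemma ev_power_sum: "ev \<sigma> (power_sum n m) = (\<Sum>v<n. \<sigma> v ^ m)"
  by (simp add: power_sum_def ev_sum ev_var_pow)

lemma sum_pairs: "(\<Sum>v<2*(k::nat). g v) = (\<Sum>l<k. g (2*l) + g (2*l+1))"
  by (induction k) (auto simp: sum.distrib add_ac)

lemma sum_upto_pairs:
  fixes g :: "nat \<Rightarrow> 'b::comm_monoid_add" and i n :: nat
  assumes "2*i \<le> n" "\<And>v. v \<ge> 2*i \<Longrightarrow> g v = 0"
  shows "(\<Sum>v<n. g v) = (\<Sum>l<i. g (2*l) + g (2*l+1))"
proof -
  have "(\<Sum>v<n. g v) = (\<Sum>v<2*i. g v)"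
    by (rule sum.mono_neutral_right) (use assms in auto)
  then show ?thesis by (simp add: sum_pairs)
qed

lemma TE_mo: "of_nat m * T l ^ (m-1) * E l = Poly_Mapping.single (mo l m) (of_nat m)"
proof -
  have "T l ^ (m-1) * E l = (Poly_Mapping.single (mo l m) 1 :: 'a::comm_ring_1 mpoly)"
    by (simp only: T_def E_def single_var_pow mult_single mo_def mult_1)
  moreover have h2: "(of_nat m :: 'a mpoly) = Poly_Mapping.single 0 (of_nat m)" by simp
  ultimately have "of_nat m * T l ^ (m-1) * E l = Poly_Mapping.single 0 (of_nat m) * (Poly_Mapping.single (mo l m) (1::'a))"
    by (simp only: mult.assoc)
  also have "\<dots> = Poly_Mapping.single (mo l m) (of_nat m)"
    by (simp only: mult_single add_0 mult_1_right)
  finally show ?thesis .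
qed

lemma ev_ps_coeff0:
  assumes "odd m" "2*i \<le> n"
  shows "coeff (ev (sig i) (power_sum n m) :: 'a::comm_ring_1 mpoly poly) 0 = 0"
proof -
  have "coeff (ev (sig i) (power_sum n m) :: 'a mpoly poly) 0 = (\<Sum>v<n. coeff (sig i v) 0 ^ m)"
    by (simp add: ev_power_sum coeff_sum coeff_0_power)
  also have "\<dots> = (\<Sum>l<i. coeff (sig i (2*l)) 0 ^ m + coeff (sig i (2*l+1)) 0 ^ m)"
    by (rule sum_upto_pairs) (use assms in \<open>auto simp: sig_def zero_power odd_pos\<close>)
  also have "\<dots> = 0"
    by (rule sum.neutral) (use assms in \<open>auto simp: sig_def power_minus_odd\<close>)
  finally show ?thesis .
qed

lemma ev_ps_coeff1:
  assumes "odd m" "2*i \<le> n"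
  shows "coeff (ev (sig i) (power_sum n m) :: 'a::comm_ring_1 mpoly poly) 1 = lin i m"
proof -
  have "coeff (ev (sig i) (power_sum n m) :: 'a mpoly poly) 1
      = (\<Sum>v<n. of_nat m * coeff (sig i v) 0 ^ (m-1) * coeff (sig i v) 1)"
    by (simp only: ev_power_sum coeff_sum coeff_power_1)
  also have "\<dots> = (\<Sum>l<i. of_nat m * coeff (sig i (2*l)) 0 ^ (m-1) * coeff (sig i (2*l)) 1
       + of_nat m * coeff (sig i (2*l+1)) 0 ^ (m-1) * coeff (sig i (2*l+1)) 1)"
    by (rule sum_upto_pairs) (use assms in \<open>auto simp: sig_def\<close>)
  also have "\<dots> = (\<Sum>l<i. of_nat m * T l ^ (m-1) * E l)"
    by (rule sum.cong) (auto simp: sig_def)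
  also have "\<dots> = lin i m"
    by (simp only: lin_def TE_mo)
  finally show ?thesis .
qed

lemma ev_ps_shape:
  assumes "odd m" "2*i \<le> n"
  shows "\<exists>R. (ev (sig i) (power_sum n m) :: 'a::comm_ring_1 mpoly poly) = pCons 0 R \<and> coeff R 0 = lin i m"
proof -
  obtain c R where cR: "(ev (sig i) (power_sum n m) :: 'a mpoly poly) = pCons c R"
    by (rule pCons_cases)
  have "c = 0" using ev_ps_coeff0[OF assms, where 'a='a] cR by simp
  moreover have "coeff R 0 = lin i m" using ev_ps_coeff1[OF assms, where 'a='a] cR by simp
  ultimately show ?thesis using cR by blast
qed




lemma pCons0_monom: "pCons 0 p = monom 1 1 * (p::'b::comm_ring_1 poly)"
  by (simp add: monom_Suc monom_0)

lemma prod_shape: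
  assumes "\<forall>m\<in>set ms. odd m" "2*i \<le> n"
  shows "\<exists>Q. (ev (sig i) (prod_list (map (power_sum n) ms)) :: 'a::comm_ring_1 mpoly poly)
            = monom 1 (length ms) * Q \<and> coeff Q 0 = prod_list (map (lin i) ms)"
  using assms(1)
proof (induction ms)
  case Nil
  then show ?case by (intro exI[of _ 1]) simp
next
  case (Cons m ms)
  then obtain Q where Q: "(ev (sig i) (prod_list (map (power_sum n) ms)) :: 'a mpoly poly)
            = monom 1 (length ms) * Q" "coeff Q 0 = prod_list (map (lin i) ms)" by auto
  obtain R where R: "(ev (sig i) (power_sum n m) :: 'a mpoly poly) = pCons 0 R" "coeff R 0 = lin i m"
    using ev_ps_shape[of m i n, where 'a='a] Cons.prems assms(2) by auto
  have "(ev (sig i) (prod_list (map (power_sum n) (m#ms))) :: 'a mpoly poly)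
      = monom 1 1 * R * (monom 1 (length ms) * Q)"
    by (simp add: ev_mult Q(1) R(1) pCons0_monom)
  also have "\<dots> = monom 1 (length (m#ms)) * (R * Q)"
    by (simp add: mult_monom mult_ac)
  finally show ?case using Q(2) R(2) by (intro exI[of _ "R*Q"]) (simp add: coeff_mult_0)
qed

lemma coeff_prod_lt:
  assumes "\<forall>m\<in>set ms. odd m" "2*i \<le> n" "N < length ms"
  shows "coeff (ev (sig i) (prod_list (map (power_sum n) ms)) :: 'a::comm_ring_1 mpoly poly) N = 0"
  using prod_shape[OF assms(1,2), where 'a='a] assms(3) by (auto simp: coeff_monom_mult)

lemma coeff_prod_eq:
  assumes "\<forall>m\<in>set ms. odd m" "2*i \<le> n"
  shows "coeff (ev (sig i) (prod_list (map (power_sum n) ms)) :: 'a::comm_ring_1 mpoly poly) (length ms)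
     = prod_list (map (lin i) ms)"
  using prod_shape[OF assms(1,2), where 'a='a] by (auto simp: coeff_monom_mult)

lemma prod_list_nth: "prod_list (map f xs) = (\<Prod>r<length xs. f (xs ! r))"
  by (induction xs) (simp_all add: prod.lessThan_Suc_shift del: prod.lessThan_Suc)

lemma prod_single:
  "finite A \<Longrightarrow> (\<Prod>x\<in>A. Poly_Mapping.single (k x) (c x)) = Poly_Mapping.single (\<Sum>x\<in>A. k x) (\<Prod>x\<in>A. (c x::'b::comm_semiring_1))"
  by (induction A rule: finite_induct) (auto simp: mult_single)

lemma PL_expand:
  "prod_list (map (lin i) ms) = (\<Sum>f\<in>PiE {..<length ms} (\<lambda>_. {..<i}).
      Poly_Mapping.single (\<Sum>r<length ms. mo (f r) (ms!r)) (\<Prod>r<length ms. of_nat (ms!r) :: 'a::comm_ring_1))"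
proof -
  have "prod_list (map (lin i) ms) = (\<Prod>r<length ms. \<Sum>l<i. Poly_Mapping.single (mo l (ms!r)) (of_nat (ms!r) :: 'a))"
    by (simp add: prod_list_nth lin_def)
  also have "\<dots> = (\<Sum>f\<in>PiE {..<length ms} (\<lambda>_. {..<i}). \<Prod>r<length ms. Poly_Mapping.single (mo (f r) (ms!r)) (of_nat (ms!r) :: 'a))"
    by (rule prod_sum_PiE) auto
  also have "\<dots> = (\<Sum>f\<in>PiE {..<length ms} (\<lambda>_. {..<i}).
      Poly_Mapping.single (\<Sum>r<length ms. mo (f r) (ms!r)) (\<Prod>r<length ms. of_nat (ms!r) :: 'a))"
    by (rule sum.cong) (auto simp: prod_single)
  finally show ?thesis .
qed

lemma lookup_PL:
  "Poly_Mapping.lookup (prod_list (map (lin i) ms) :: 'a::comm_ring_1 mpoly) M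
    = (\<Sum>f\<in>PiE {..<length ms} (\<lambda>_. {..<i}).
        ((\<Prod>r<length ms. of_nat (ms!r)) when (\<Sum>r<length ms. mo (f r) (ms!r)) = M))"
  by (simp add: PL_expand lookup_sum lookup_single)




lemma lookup_mo_odd: "Poly_Mapping.lookup (mo l' m) (2*l+1) = (if l' = l then 1 else 0)"
  by (auto simp: mo_def lookup_add lookup_single when_def)

lemma lookup_mo_even: "Poly_Mapping.lookup (mo l' m) (2*l) = (if l' = l then m-1 else 0)"
  by (auto simp: mo_def lookup_add lookup_single when_def)

lemma sum_if_card: "finite A \<Longrightarrow> (\<Sum>r\<in>A. if P r then (1::nat) else 0) = card {r\<in>A. P r}"
  by (simp add: sum.inter_filter[symmetric])

lemma mset_nth: "mset xs = image_mset (nth xs) (mset_set {..<length xs})"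
proof -
  have "mset xs = mset (map (nth xs) [0..<length xs])" by (simp add: map_nth)
  also have "\<dots> = image_mset (nth xs) (mset [0..<length xs])" by (rule mset_map)
  finally show ?thesis by (simp add: mset_set_upto_eq_mset_upto)
qed

lemma core_A:
  fixes ms w :: "nat list"
  assumes len: "length ms = N" "length w = N" and pos: "\<forall>x\<in>set ms. x \<ge> 1" "\<forall>x\<in>set w. x \<ge> 1"
    and f: "f \<in> PiE {..<N} (\<lambda>_. {..<i})"
    and eq: "(\<Sum>r<N. mo (f r) (ms!r)) = (\<Sum>r<N. mo r (w!r))"
  shows "mset ms = mset w"
proof -
  have cnt: "card {r\<in>{..<N}. f r = l} = (if l < N then 1 else 0)" for l
  proof -
    have "Poly_Mapping.lookup (\<Sum>r<N. mo (f r) (ms!r)) (2*l+1) = card {r\<in>{..<N}. f r = l}"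
      unfolding lookup_sum lookup_mo_odd by (simp add: sum_if_card)
    moreover have "Poly_Mapping.lookup (\<Sum>r<N. mo r (w!r)) (2*l+1) = (if l < N then 1 else 0)"
      unfolding lookup_sum lookup_mo_odd by simp
    ultimately show ?thesis using eq by simp
  qed
  have into: "f r < N" if "r < N" for r
  proof (rule ccontr)
    assume "\<not> f r < N"
    then have "card {r'\<in>{..<N}. f r' = f r} = 0" using cnt[of "f r"] by simp
    moreover have "r \<in> {r'\<in>{..<N}. f r' = f r}" using that by simp
    moreover have fin: "finite {r'\<in>{..<N}. f r' = f r}" by simp
    ultimately show False using card_0_eq[OF fin] by blast
  qed
  have inj: "inj_on f {..<N}"
  proof (rule inj_onI)
    fix r1 r2 assume r: "r1 \<in> {..<N}" "r2 \<in> {..<N}" "f r1 = f r2"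
    have "card {r'\<in>{..<N}. f r' = f r1} = 1" using cnt[of "f r1"] into r by simp
    then obtain z where z: "{r'\<in>{..<N}. f r' = f r1} = {z}" by (auto simp: card_Suc_eq)
    have "r1 \<in> {z}" "r2 \<in> {z}" using r by (auto simp flip: z)
    then show "r1 = r2" by simp
  qed
  have img: "f ` {..<N} = {..<N}"
    by (rule endo_inj_surj) (use into inj in auto)
  have val: "ms!r0 = w!(f r0)" if r0: "r0 < N" for r0
  proof -
    have "Poly_Mapping.lookup (\<Sum>r<N. mo (f r) (ms!r)) (2*f r0) = (\<Sum>r<N. if r = r0 then ms!r - 1 else 0)"
      unfolding lookup_sum lookup_mo_even
      by (rule sum.cong) (use inj r0 in \<open>auto simp: inj_on_def\<close>)
    also have "\<dots> = ms!r0 - 1" using r0 by simp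
    finally have 1: "Poly_Mapping.lookup (\<Sum>r<N. mo (f r) (ms!r)) (2*f r0) = ms!r0 - 1" .
    have 2: "Poly_Mapping.lookup (\<Sum>r<N. mo r (w!r)) (2*f r0) = w!(f r0) - 1"
      using into[OF r0] unfolding lookup_sum lookup_mo_even by simp
    have "ms!r0 \<ge> 1" using pos(1) r0 len by auto
    moreover have "w!(f r0) \<ge> 1" using pos(2) into[OF r0] len by auto
    ultimately show ?thesis using 1 2 eq by simp
  qed
  have "mset ms = image_mset (nth ms) (mset_set {..<N})" using len by (simp add: mset_nth)
  also have "\<dots> = image_mset (\<lambda>r. w!(f r)) (mset_set {..<N})"
    by (rule image_mset_cong) (simp add: val)
  also have "\<dots> = image_mset (nth w) (image_mset f (mset_set {..<N}))"
    by (simp add: image_mset.compositionality comp_def)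
  also have "\<dots> = image_mset (nth w) (mset_set {..<N})"
    by (simp add: image_mset_mset_set[OF inj] img)
  also have "\<dots> = mset w" using len by (simp add: mset_nth)
  finally show ?thesis .
qed




lemma of_nat_when: "of_nat (a when P) = (of_nat a when P)"
  by (simp add: when_def)

lemma core_B:
  assumes len: "length w = N" and Ni: "N \<le> i" and pos: "\<forall>x\<in>set w. x \<ge> 1"
  shows "Poly_Mapping.lookup (prod_list (map (lin i) w) :: 'a::field_char_0 mpoly) (\<Sum>r<N. mo r (w!r)) \<noteq> 0"
proof -
  let ?P = "PiE {..<N} (\<lambda>_. {..<i})"
  let ?M = "\<Sum>r<N. mo r (w!r)"
  define f0 where "f0 = (\<lambda>r::nat. if r < N then r else undefined)"
  have f0P: "f0 \<in> ?P" using Ni by (auto simp: f0_def PiE_iff extensional_def)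
  have f0c: "(\<Sum>r<N. mo (f0 r) (w!r)) = ?M" by (simp add: f0_def)
  define c where "c = (\<Prod>r<N. w!r)"
  have cpos: "c > 0" unfolding c_def using len pos by (auto intro!: prod_pos simp: Suc_le_eq)
  define Sm where "Sm = (\<Sum>f\<in>?P. (c when (\<Sum>r<N. mo (f r) (w!r)) = ?M))"
  have "Poly_Mapping.lookup (prod_list (map (lin i) w) :: 'a mpoly) ?M
      = (\<Sum>f\<in>?P. ((\<Prod>r<N. of_nat (w!r)) when (\<Sum>r<N. mo (f r) (w!r)) = ?M))"
    using lookup_PL[of i w ?M, where 'a='a] by (simp only: len)
  also have "(\<Prod>r<N. of_nat (w!r)) = (of_nat c :: 'a)" unfolding c_def by (simp only: of_nat_prod)
  also have "(\<Sum>f\<in>?P. ((of_nat c :: 'a) when (\<Sum>r<N. mo (f r) (w!r)) = ?M)) = of_nat Sm"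
    unfolding Sm_def by (simp only: of_nat_sum of_nat_when)
  finally have eq: "Poly_Mapping.lookup (prod_list (map (lin i) w) :: 'a mpoly) ?M = of_nat Sm" .
  have "c \<le> Sm"
  proof -
    have "(c when (\<Sum>r<N. mo (f0 r) (w!r)) = ?M) = c" using f0c by simp
    moreover have "(c when (\<Sum>r<N. mo (f0 r) (w!r)) = ?M) \<le> Sm"
      unfolding Sm_def by (rule member_le_sum[OF f0P]) (simp_all add: finite_PiE)
    ultimately show ?thesis by simp
  qed
  then have "0 < Sm" using cpos by linarith
  then have "of_nat Sm \<noteq> (0::'a)" by (simp only: of_nat_eq_0_iff neq0_conv)
  then show ?thesis unfolding eq .
qed

definition fac :: "nat list \<times> nat multiset \<Rightarrow> nat multiset" where
  "fac d = (\<Sum>t<length (fst d). replicate_mset (fst d ! t) (2*t+1)) + image_mset (\<lambda>b. 2*b+1) (snd d)"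

lemma prod_rep: "(\<Prod>t<(L::nat). G (h t) ^ c t) = prod_mset (image_mset G (\<Sum>t<L. replicate_mset (c t) (h t)))"
  by (induction L) (auto simp: image_mset_union image_replicate_mset prod_mset_replicate_mset)

lemma pp_fac: "proper_prod n d = prod_mset (image_mset (power_sum n) (fac d))"
  unfolding proper_prod_def fac_def image_mset_union prod_mset.union
  by (subst prod_rep[of "power_sum n" "\<lambda>t. 2*t+1", symmetric])
     (simp add: image_mset.compositionality comp_def)

lemma odd_rep: "x \<in># (\<Sum>t<(L::nat). replicate_mset (c t) (Suc (2*t))) \<Longrightarrow> odd x"
  by (induction L) (auto split: if_splits)

lemma fac_odd: "\<forall>m\<in>#fac d. odd m"
  by (auto simp: fac_def dest: odd_rep)

lemma count_rep: "(t::nat) < L \<Longrightarrow> count (\<Sum>t'<L. replicate_mset (c t') (Suc (2*t'))) (Suc (2*t)) = c t"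
  by (simp add: count_sum sum.delta)

lemma fac_inj:
  assumes "proper_data i j d" "proper_data i j d'" "fac d = fac d'"
  shows "d = d'"
proof -
  obtain cs B where d: "d = (cs, B)" by (cases d)
  obtain cs' B' where d': "d' = (cs', B')" by (cases d')
  have l: "length cs = Suc j" "length cs' = Suc j" "\<forall>b\<in>#B. j < b" "\<forall>b\<in>#B'. j < b"
    using assms(1,2) by (auto simp: proper_data_def d d')
  have cnt0: "count (image_mset (\<lambda>b. 2*b+1) X) (2*t+1) = 0" if "\<forall>b\<in>#X. j < b" "t < Suc j" for X t
    using that by (auto simp: count_image_mset' intro!: sum.neutral)
  have "cs ! t = cs' ! t" if "t < Suc j" for t
  proof -
    have "count (fac d) (2*t+1) = cs ! t"
      using that l cnt0[OF l(3) that] by (simp add: fac_def d count_rep del: sum.lessThan_Suc)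
    moreover have "count (fac d') (2*t+1) = cs' ! t"
      using that l cnt0[OF l(4) that] by (simp add: fac_def d' count_rep del: sum.lessThan_Suc)
    ultimately show ?thesis using assms(3) by simp
  qed
  then have cs: "cs = cs'" using l by (auto intro: nth_equalityI)
  then have "image_mset (\<lambda>b. 2*b+1) B = image_mset (\<lambda>b. 2*b+1) B'"
    using assms(3) by (simp add: fac_def d d')
  moreover have "inj (\<lambda>b::nat. 2*b+1)" by (auto simp: inj_def)
  ultimately have "B = B'" by (metis multiset.inj_map injD)
  with cs show ?thesis by (simp add: d d')
qed




lemma lookup_single0_mult: "Poly_Mapping.lookup (Poly_Mapping.single 0 a * h) k = (a::'a::comm_ring_1) * Poly_Mapping.lookup h k"
  by (simp add: mult_map_scale_conv_mult[symmetric] map.rep_eq when_def)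

lemma coeff_const_mult: "coeff ([:c:] * p) k = c * coeff p k"
  by simp

theorem mainTheorem10:
  fixes n :: nat and a :: "nat list"
    and S :: "(nat list \<times> nat multiset) set"
    and \<alpha> :: "nat list \<times> nat multiset \<Rightarrow> 'a::field_char_0"
  assumes "n \<ge> 1"
    and "length a = n div 2 + 1"
    and "\<forall>x\<in>set a. (n - 1) div 2 < x"
    and "finite S"
    and "\<forall>d\<in>S. proper_data (n div 2) ((n - 1) div 2) d"
    and "(\<Prod>x\<leftarrow>a. power_sum n (2*x+1) :: 'a mpoly) = (\<Sum>d\<in>S. Poly_Mapping.single 0 (\<alpha> d) * proper_prod n d)"
  shows "\<forall>d\<in>S. \<alpha> d \<noteq> 0 \<longrightarrow> (\<exists>t<length (fst d). 0 < fst d ! t)"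
proof (intro ballI impI, rule ccontr)
  fix d0 assume d0S: "d0 \<in> S" and ad0: "\<alpha> d0 \<noteq> 0" and nz: "\<not> (\<exists>t<length (fst d0). 0 < fst d0 ! t)"
  define i where "i = n div 2"
  define j where "j = (n - 1) div 2"
  have i2: "2*i \<le> n" by (simp add: i_def)
  define K where "K d = size (fac d)" for d
  define xs where "xs d = sorted_list_of_multiset (fac d)" for d
  have pp: "proper_prod n d = prod_list (map (power_sum n) (xs d))" for d
    by (simp only: pp_fac xs_def prod_mset_prod_list[symmetric] mset_map mset_sorted_list_of_multiset)
  have oddxs: "\<forall>m\<in>set (xs d). odd m" for d
    using fac_odd[of d] by (simp add: xs_def)
  have lenxs: "length (xs d) = K d" for d
  proof -
    have "size (mset (sorted_list_of_multiset (fac d))) = size (fac d)" by (simp only: mset_sorted_list_of_multiset)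
    then show ?thesis by (simp only: xs_def K_def size_mset)
  qed
  have prp: "proper_data i j d" if "d \<in> S" for d using assms(5) that by (simp add: i_def j_def)
  have "fst d0 ! t = 0" if "t < length (fst d0)" for t using nz that by auto
  then have "fac d0 = image_mset (\<lambda>b. 2*b+1) (snd d0)"
    by (simp add: fac_def)
  then have Kd0: "K d0 \<le> i" using prp[OF d0S] by (simp add: K_def proper_data_def)
  define A where "A = {d\<in>S. \<alpha> d \<noteq> 0}"
  have finA: "finite A" using assms(4) by (simp add: A_def)
  have d0A: "d0 \<in> A" using d0S ad0 by (simp add: A_def)
  define N where "N = Min (K ` A)"
  have NK: "N \<le> K d" if "d \<in> A" for d using finA that by (simp add: N_def)
  have Ni: "N \<le> i" using NK[OF d0A] Kd0 by simp
  have "N \<in> K ` A" unfolding N_def using finA d0A by (intro Min_in) auto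
  then obtain ds where dsA: "ds \<in> A" and Kds: "K ds = N" by auto
  let ?ev = "ev (sig i) :: 'a mpoly \<Rightarrow> 'a mpoly poly"
  have lhs: "coeff (?ev (\<Prod>x\<leftarrow>a. power_sum n (2*x+1))) N = 0"
  proof -
    have "(\<Prod>x\<leftarrow>a. power_sum n (2*x+1) :: 'a mpoly) = prod_list (map (power_sum n) (map (\<lambda>x. 2*x+1) a))"
      by (simp add: comp_def)
    moreover have "N < length (map (\<lambda>x. 2*x+1) a)" using Ni assms(2) by (simp add: i_def)
    ultimately show ?thesis using coeff_prod_lt[of "map (\<lambda>x. 2*x+1) a" i n N] i2 by simp
  qed
  define PL where "PL d = (prod_list (map (lin i) (xs d)) :: 'a mpoly)" for d
  have trm: "Poly_Mapping.single 0 (\<alpha> d) * coeff (?ev (proper_prod n d)) N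
      = (if d \<in> A \<and> K d = N then Poly_Mapping.single 0 (\<alpha> d) * PL d else 0)" if "d \<in> S" for d
  proof (cases "\<alpha> d = 0")
    case True then show ?thesis by (simp add: A_def)
  next
    case False
    then have dA: "d \<in> A" using that by (simp add: A_def)
    show ?thesis
    proof (cases "K d = N")
      case True
      then show ?thesis using dA coeff_prod_eq[OF oddxs i2, of d, where 'a='a]
        by (simp add: pp lenxs PL_def)
    next
      case False
      then have "N < length (xs d)" using NK[OF dA] lenxs[of d] by simp
      then show ?thesis using False coeff_prod_lt[OF oddxs i2, of N d, where 'a='a]
        by (simp add: pp)
    qed
  qed
  have "0 = coeff (?ev (\<Sum>d\<in>S. Poly_Mapping.single 0 (\<alpha> d) * proper_prod n d)) N"
    using lhs assms(6) by simp
  also have "\<dots> = (\<Sum>d\<in>S. Poly_Mapping.single 0 (\<alpha> d) * coeff (?ev (proper_prod n d)) N)"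
    by (simp add: ev_sum ev_mult ev_single coeff_sum)
  also have "\<dots> = (\<Sum>d\<in>S. if d \<in> A \<and> K d = N then Poly_Mapping.single 0 (\<alpha> d) * PL d else 0)"
    by (rule sum.cong) (simp_all add: trm)
  finally have zero: "(\<Sum>d\<in>S. if d \<in> A \<and> K d = N then Poly_Mapping.single 0 (\<alpha> d) * PL d else 0) = 0" by simp
  define w where "w = xs ds"
  define M where "M = (\<Sum>r<N. mo r (w!r))"
  have lenw: "length w = N" using lenxs Kds by (simp add: w_def)
  have posw: "\<forall>x\<in>set w. x \<ge> 1" using oddxs[of ds] by (auto simp: w_def odd_pos Suc_le_eq)
  have other: "Poly_Mapping.lookup (PL d) M = 0" if "d \<in> S" "K d = N" "d \<noteq> ds" for d
  proof (rule ccontr)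
    assume "Poly_Mapping.lookup (PL d) M \<noteq> 0"
    then have "(\<Sum>f\<in>PiE {..<length (xs d)} (\<lambda>_. {..<i}).
        ((\<Prod>r<length (xs d). of_nat (xs d!r)) when (\<Sum>r<length (xs d). mo (f r) (xs d!r)) = M)) \<noteq> (0::'a)"
      by (simp add: PL_def lookup_PL)
    then obtain f where f: "f \<in> PiE {..<length (xs d)} (\<lambda>_. {..<i})"
      and c0: "((\<Prod>r<length (xs d). of_nat (xs d!r)) when (\<Sum>r<length (xs d). mo (f r) (xs d!r)) = M) \<noteq> (0::'a)"
      by (rule sum.not_neutral_contains_not_neutral)
    from c0 have c: "(\<Sum>r<length (xs d). mo (f r) (xs d!r)) = M" by (simp add: when_def split: if_splits)
    have lx: "length (xs d) = N" using lenxs that(2) by simp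
    have posd: "\<forall>x\<in>set (xs d). x \<ge> 1" using oddxs[of d] by (auto simp: odd_pos Suc_le_eq)
    have c': "(\<Sum>r<N. mo (f r) (xs d!r)) = (\<Sum>r<N. mo r (w!r))" using c lx by (simp add: M_def)
    have f': "f \<in> PiE {..<N} (\<lambda>_. {..<i})" using f lx by simp
    have "mset (xs d) = mset w" by (rule core_A[OF lx lenw posd posw f' c'])
    then have "fac d = fac ds" by (simp add: xs_def w_def)
    then have "d = ds" using fac_inj[OF prp[OF that(1)] prp] dsA by (simp add: A_def)
    with that(3) show False by simp
  qed
  have "0 = Poly_Mapping.lookup (\<Sum>d\<in>S. if d \<in> A \<and> K d = N then Poly_Mapping.single 0 (\<alpha> d) * PL d else 0) M"
    using zero by simp
  also have "\<dots> = (\<Sum>d\<in>S. if d = ds then \<alpha> ds * Poly_Mapping.lookup (PL ds) M else 0)"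
    unfolding lookup_sum
    by (rule sum.cong) (auto simp: lookup_single0_mult other dsA Kds)
  also have "\<dots> = \<alpha> ds * Poly_Mapping.lookup (PL ds) M"
    using dsA assms(4) by (simp add: A_def sum.delta)
  finally have "\<alpha> ds * Poly_Mapping.lookup (PL ds) M = 0" by simp
  moreover have "\<alpha> ds \<noteq> 0" using dsA by (simp add: A_def)
  moreover have "Poly_Mapping.lookup (PL ds) M \<noteq> 0"
    unfolding PL_def M_def w_def[symmetric] using core_B[OF lenw Ni posw, where 'a='a] by simp
  ultimately show False by simp
qed


end
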